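(* Let $\Psi\in\mathcal{L}PSH^*(\mathbb{C}^n)$ be an indicator, let $\psi(t)=\Psi(e^{t_1},\ldots,e^{t_n})$, and suppose that $\psi^+=\max\{\psi,0\}$ is the supporting function of a lower set. Then \[ \inf\{\psi^+(t):\ t\in H_1\}=\inf\{\psi^+(t):\ t\in\Sigma_{\mathbf 1}\}. \]
   Context: $\mathcal{L}PSH^*(\mathbb{C}^n)$: plurisubharmonic functions $u$ on $\mathbb{C}^n$ with $\limsup_{|z|\to\infty}u(z)/\log|z|<\infty$ and $u(z)\to+\infty$ as $|z|\to\infty$. An indicator is a plurisubharmonic $\Psi$ with $\Psi(z)=\Psi(|z_1|,\ldots,|z_n|)$ and $\Psi(|z_1|^c,\ldots,|z_n|^c)=c\Psi(z)$ for all $c>0$. The supporting function of $\Gamma$ is $h_\Gamma(t)=\sup\{\langle a,t\rangle:a\in\Gamma\}$. A compact convex set $\Gamma\subset\overline{\mathbb{R}}_+^n$ (closed nonnegative orthant) is a lower set if $a\in\Gamma$ implies $b\in\Gamma$ for every $b$ with $0<b_k<a_k$ for all $k$. $H_1=\{t\in\mathbb{R}^n:\sum_kt_k=1\}$ and $\Sigma_{\mathbf 1}=\{b\in\overline{\mathbb{R}}_+^n:\sum_kb_k=1\}$. *)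

theory Defs
  imports "HOL-Analysis.Analysis"
begin

definition usc :: "('a::topological_space \<Rightarrow> ereal) \<Rightarrow> bool" where
  "usc u \<longleftrightarrow> (\<forall>c::ereal. open {x. u x < c})"

definition circle_mean :: "(complex \<Rightarrow> ereal) \<Rightarrow> complex \<Rightarrow> real \<Rightarrow> ereal" where
  "circle_mean u z r =
     (enn2ereal (\<integral>\<^sup>+ \<theta>\<in>{0..2*pi}. e2ennreal (max (u (z + of_real r * cis \<theta>)) 0) \<partial>lborel)
      - enn2ereal (\<integral>\<^sup>+ \<theta>\<in>{0..2*pi}. e2ennreal (max (- u (z + of_real r * cis \<theta>)) 0) \<partial>lborel))
     / ereal (2 * pi)"

definition subharmonic :: "(complex \<Rightarrow> ereal) \<Rightarrow> bool" where
  "subharmonic u \<longleftrightarrow> (\<forall>z. u z \<noteq> \<infinity>) \<and> usc u \<and>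
     (\<forall>z r. r > 0 \<longrightarrow> u z \<le> circle_mean u z r)"

definition plurisubharmonic :: "(complex^'n \<Rightarrow> ereal) \<Rightarrow> bool" where
  "plurisubharmonic u \<longleftrightarrow> (\<forall>z. u z \<noteq> \<infinity>) \<and> usc u \<and>
     (\<forall>a b. subharmonic (\<lambda>w. u (a + w *s b)))"

definition LPSH_star :: "(complex^'n \<Rightarrow> ereal) \<Rightarrow> bool" where
  "LPSH_star u \<longleftrightarrow> plurisubharmonic u \<and>
     Limsup at_infinity (\<lambda>z. u z / ereal (ln (norm z))) < \<infinity> \<and>
     (u \<longlongrightarrow> \<infinity>) at_infinity"

definition is_indicator :: "(complex^'n \<Rightarrow> ereal) \<Rightarrow> bool" where
  "is_indicator \<Psi> \<longleftrightarrow> plurisubharmonic \<Psi> \<and>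
     (\<forall>z. \<Psi> z = \<Psi> (\<chi> k. complex_of_real (norm (z $ k)))) \<and>
     (\<forall>z (c::real). c > 0 \<longrightarrow>
        \<Psi> (\<chi> k. complex_of_real (norm (z $ k) powr c)) = ereal c * \<Psi> z)"

definition supp_fun :: "(real^'n) set \<Rightarrow> real^'n \<Rightarrow> ereal" where
  "supp_fun \<Gamma> t = (SUP a\<in>\<Gamma>. ereal (a \<bullet> t))"

definition lower_set :: "(real^'n) set \<Rightarrow> bool" where
  "lower_set \<Gamma> \<longleftrightarrow> compact \<Gamma> \<and> convex \<Gamma> \<and> (\<forall>a\<in>\<Gamma>. \<forall>k. a $ k \<ge> 0) \<and>
     (\<forall>a\<in>\<Gamma>. \<forall>b. (\<forall>k. 0 < b $ k \<and> b $ k < a $ k) \<longrightarrow> b \<in> \<Gamma>)"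

definition H1 :: "(real^'n) set" where
  "H1 = {t. (\<Sum>k\<in>UNIV. t $ k) = 1}"

definition Sigma1 :: "(real^'n) set" where
  "Sigma1 = {b. (\<forall>k. b $ k \<ge> 0) \<and> (\<Sum>k\<in>UNIV. b $ k) = 1}"

end

theory Submission
  imports Defs
begin

lemma convex_U: "convex {x::real^'n. \<forall>k. c < x $ k}"
proof (rule convexI)
  fix x y :: "real^'n" and u v :: real
  assume x: "x \<in> {x. \<forall>k. c < x $ k}" and y: "y \<in> {x. \<forall>k. c < x $ k}"
    and u: "0 \<le> u" and v: "0 \<le> v" and uv: "u + v = 1"
  show "u *\<^sub>R x + v *\<^sub>R y \<in> {x. \<forall>k. c < x $ k}"
  proof (simp, intro allI)
    fix k
    have "u * c \<le> u * x $ k" using x u by (simp add: mult_left_mono less_imp_le)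
    moreover have "v * c \<le> v * y $ k" using y v by (simp add: mult_left_mono less_imp_le)
    moreover have "u * c < u * x $ k \<or> v * c < v * y $ k"
      using x y u v uv by (cases "u = 0") auto
    ultimately have "u * c + v * c < u * x $ k + v * y $ k" by linarith
    moreover have "u * c + v * c = c" using uv by (metis distrib_right mult_1)
    ultimately show "c < u * x $ k + v * y $ k" by simp
  qed
qed

lemma key:
  fixes \<Gamma> :: "(real^'n) set" and c :: real
  assumes cv: "convex \<Gamma>" and ne: "\<Gamma> \<noteq> {}" and c: "c > 0"
    and low: "\<forall>a\<in>\<Gamma>. \<forall>b. (\<forall>k. 0 < b $ k \<and> b $ k < a $ k) \<longrightarrow> b \<in> \<Gamma>"
    and big: "\<forall>s\<in>Sigma1. ereal c < supp_fun \<Gamma> s"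
  shows "(\<chi> k. c) \<in> \<Gamma>"
proof (rule ccontr)
  assume nin: "(\<chi> k. c) \<notin> \<Gamma>"
  define U where "U = {x::real^'n. \<forall>k. c < x $ k}"
  have disj: "\<Gamma> \<inter> U = {}"
  proof (rule ccontr)
    assume "\<Gamma> \<inter> U \<noteq> {}"
    then obtain a where "a \<in> \<Gamma>" "\<forall>k. c < a $ k" unfolding U_def by auto
    then have "(\<chi> k. c) \<in> \<Gamma>" using low c by auto
    with nin show False by simp
  qed
  have Une: "U \<noteq> {}" proof -
    have "(\<chi> k. c + 1) \<in> U" unfolding U_def by simp
    thus ?thesis by blast
  qed
  have cU: "convex U" unfolding U_def by (rule convex_U)
  obtain w \<beta> where w0: "w \<noteq> 0" and wG: "\<forall>x\<in>\<Gamma>. inner w x \<le> \<beta>"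
     and wU: "\<forall>x\<in>U. inner w x \<ge> \<beta>"
    using separating_hyperplane_sets[OF cv cU ne Une disj] by (elim exE conjE) (rule that, assumption+)
  define S where "S = (\<Sum>k\<in>UNIV. w $ k)"
  have inner_eq: "inner w x = (\<Sum>k\<in>UNIV. w $ k * x $ k)" for x :: "real^'n"
    by (simp add: inner_vec_def)
  have wnn: "w $ k \<ge> 0" for k
  proof (rule ccontr)
    assume neg: "\<not> 0 \<le> w $ k"
    define lam where "lam = ((c+1) * S - \<beta>) / (- w $ k) + 1"
    define x where "x = (\<chi> j. c + 1 + (if j = k then max lam 0 else 0))"
    have "x \<in> U" unfolding U_def x_def by simp
    hence "\<beta> \<le> inner w x" using wU by blast
    also have "inner w x = (c+1) * S + w $ k * max lam 0"
    proof -
      have "inner w x = (\<Sum>j\<in>UNIV. (c+1) * w $ j + (if j = k then w $ k * max lam 0 else 0))"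
        unfolding inner_eq x_def by (intro sum.cong) (auto simp: algebra_simps)
      also have "\<dots> = (c+1) * S + w $ k * max lam 0"
        by (simp add: sum.distrib sum_distrib_left S_def)
      finally show ?thesis .
    qed
    also have "\<dots> \<le> (c+1) * S + w $ k * lam"
      using neg by (simp add: mult_left_mono_neg)
    also have "w $ k * lam = - ((c+1) * S - \<beta>) + w $ k"
      unfolding lam_def using neg by (simp add: field_simps)
    finally show False using neg by simp
  qed
  have Spos: "S > 0"
  proof -
    have "S \<ge> 0" unfolding S_def using wnn by (simp add: sum_nonneg)
    moreover have "S \<noteq> 0"
    proof
      assume "S = 0"
      hence "\<forall>k\<in>UNIV. w $ k = 0" unfolding S_def using wnn sum_nonneg_eq_0_iff[of UNIV "\<lambda>k. w $ k"]
        by simp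
      hence "w = 0" by (simp add: vec_eq_iff)
      with w0 show False by simp
    qed
    ultimately show ?thesis by simp
  qed
  have betale: "\<beta> \<le> c * S"
  proof (rule field_le_epsilon)
    fix e :: real assume e: "e > 0"
    define x where "x = (\<chi> j::'n. c + e / S)"
    have "x \<in> U" unfolding U_def x_def using e Spos by simp
    hence "\<beta> \<le> inner w x" using wU by blast
    also have "inner w x = (\<Sum>k\<in>UNIV. w $ k * (c + e / S))"
      unfolding inner_eq x_def by simp
    also have "\<dots> = S * (c + e / S)"
      unfolding S_def by (rule sum_distrib_right[symmetric])
    also have "\<dots> = c * S + e" using Spos by (simp add: field_simps)
    finally show "\<beta> \<le> c * S + e" .
  qed
  define s where "s = (1 / S) *\<^sub>R w"
  have sS: "s \<in> Sigma1"
    unfolding Sigma1_def s_def using wnn Spos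
    by (simp add: S_def[symmetric] sum_divide_distrib[symmetric])
  have "supp_fun \<Gamma> s \<le> ereal c"
    unfolding supp_fun_def
  proof (rule SUP_least)
    fix a assume "a \<in> \<Gamma>"
    hence "inner w a \<le> c * S" using wG betale by fastforce
    hence "inner s a \<le> c" unfolding s_def using Spos
      by (simp add: field_simps inner_commute)
    then show "ereal (a \<bullet> s) \<le> ereal c" by (simp add: inner_commute)
  qed
  with big sS show False by fastforce
qed

theorem lemma6p7:
  fixes \<Psi> :: "complex^'n \<Rightarrow> ereal" and \<psi> :: "real^'n \<Rightarrow> ereal"
  assumes "LPSH_star \<Psi>" and "is_indicator \<Psi>"
    and "\<And>t. \<psi> t = \<Psi> (\<chi> k. complex_of_real (exp (t $ k)))"
    and "\<exists>\<Gamma>. lower_set \<Gamma> \<and> (\<forall>t. max (\<psi> t) 0 = supp_fun \<Gamma> t)"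
  shows "(INF t\<in>H1. max (\<psi> t) 0) = (INF t\<in>Sigma1. max (\<psi> t) 0)"
proof -
  obtain \<Gamma> where L: "lower_set \<Gamma>" and h: "\<forall>t. max (\<psi> t) 0 = supp_fun \<Gamma> t"
    using assms(4) by blast
  define f where "f t = max (\<psi> t) 0" for t
  have sub: "Sigma1 \<subseteq> (H1 :: (real^'n) set)" unfolding Sigma1_def H1_def by auto
  have le1: "(INF t\<in>H1. f t) \<le> (INF t\<in>Sigma1. f t)"
    by (rule INF_superset_mono[OF sub]) simp
  have ne: "\<Gamma> \<noteq> {}"
  proof
    assume "\<Gamma> = {}"
    hence "supp_fun \<Gamma> 0 = -\<infinity>" unfolding supp_fun_def by (metis SUP_empty bot_ereal_def)
    moreover have "max (\<psi> 0) 0 \<ge> 0" by simp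
    ultimately show False using h[rule_format, of 0] by simp
  qed
  have le2: "(INF t\<in>Sigma1. f t) \<le> f t" if t: "t \<in> H1" for t
  proof (rule ccontr)
    assume "\<not> ?thesis"
    hence lt: "f t < (INF t\<in>Sigma1. f t)" by simp
    then obtain d where d1: "f t < d" and d2: "d < (INF t\<in>Sigma1. f t)"
      using ereal_dense2 by blast
    have f0: "0 \<le> f t" unfolding f_def by simp
    have "d \<noteq> \<infinity>" using d2 by auto
    moreover have "d \<noteq> -\<infinity>" using d1 f0 by auto
    ultimately obtain c where dc: "d = ereal c" by (cases d) auto
    have "0 < ereal c" using d1 f0 dc by (meson order.strict_trans1)
    hence cpos: "c > 0" by simp
    have big: "\<forall>s\<in>(Sigma1::(real^'n) set). ereal c < supp_fun \<Gamma> s"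
    proof
      fix s :: "real^'n" assume "s \<in> Sigma1"
      hence "(INF t\<in>Sigma1. f t) \<le> f s" by (rule INF_lower)
      with d2 dc have "ereal c < f s" by simp
      thus "ereal c < supp_fun \<Gamma> s" using h unfolding f_def by simp
    qed
    have "(\<chi> k. c) \<in> \<Gamma>"
      using key[OF _ ne cpos _ big] L unfolding lower_set_def by blast
    hence "ereal ((\<chi> k. c) \<bullet> t) \<le> supp_fun \<Gamma> t"
      unfolding supp_fun_def by (rule SUP_upper)
    moreover have "(\<chi> k. c) \<bullet> t = c"
      using t unfolding H1_def by (simp add: inner_vec_def sum_distrib_left[symmetric])
    ultimately have "ereal c \<le> f t" using h unfolding f_def by metis
    with d1 dc show False by simp
  qed
  have "(INF t\<in>Sigma1. f t) \<le> (INF t\<in>H1. f t)"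
    by (rule INF_greatest) (rule le2)
  with le1 show ?thesis unfolding f_def by simp
qed

end
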